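(* Let $n\ge 1$ and let $\epsilon_n=e^{2\pi\sqrt{-1}/n}$. Define \[ \Psi_n(X_0,\dots,X_{n-1})=\prod_{i\in(\mathbb Z/n\mathbb Z)^\times}\Bigl(\sum_{j\in\mathbb Z/n\mathbb Z}\epsilon_n^{ij}X_j\Bigr). \] Let the symmetric group $S_n$, viewed as the permutation group of $\mathbb Z/n\mathbb Z=\{0,1,\dots,n-1\}$, act on $\mathbb C[X_0,\dots,X_{n-1}]$ by $\sigma(X_j)=X_{\sigma(j)}$, and let $\mathrm{Stab}(\Psi_n)=\{\sigma\in S_n:\sigma(\Psi_n)=\Psi_n\}$. Then $\mathrm{Stab}(\Psi_n)=\{\mathrm{id}\}$ if $n=1,2$, and $\mathrm{Stab}(\Psi_n)=G_n$ if $n>2$, where $G_n=\{\alpha_{a,b}: a\in(\mathbb Z/n\mathbb Z)^\times,\ b\in\mathbb Z/n\mathbb Z\}$ and $\alpha_{a,b}$ is the permutation $x\mapsto ax+b$ of $\mathbb Z/n\mathbb Z$.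
   Context: $G_n$ is the affine group $\mathrm{AGL}(1,\mathbb Z/n\mathbb Z)$ viewed as a subgroup of $S_n$. *)

theory Defs
  imports Complex_Main "HOL-Combinatorics.Permutations"
begin

text \<open>Polynomials in the variables X_0,...,X_{n-1} over the complex numbers are represented
  by their polynomial functions (nat => complex) => complex; since the complex numbers are an
  infinite field, two polynomials are equal iff their polynomial functions are equal.\<close>

definition eps :: "nat \<Rightarrow> complex" where
  "eps n = cis (2 * pi / real n)"

definition units_mod :: "nat \<Rightarrow> nat set" where
  "units_mod n = {i. i < n \<and> coprime i n}"

definition Psi :: "nat \<Rightarrow> (nat \<Rightarrow> complex) \<Rightarrow> complex" where
  "Psi n X = (\<Prod>i\<in>units_mod n. \<Sum>j<n. eps n ^ (i * j) * X j)"

definition perm_act :: "(nat \<Rightarrow> nat) \<Rightarrow> ((nat \<Rightarrow> complex) \<Rightarrow> complex) \<Rightarrow> ((nat \<Rightarrow> complex) \<Rightarrow> complex)" where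
  "perm_act \<sigma> P = (\<lambda>X. P (\<lambda>j. X (\<sigma> j)))"

definition Stab :: "nat \<Rightarrow> (nat \<Rightarrow> nat) set" where
  "Stab n = {\<sigma>. \<sigma> permutes {..<n} \<and> perm_act \<sigma> (Psi n) = Psi n}"

definition affine_perm :: "nat \<Rightarrow> nat \<Rightarrow> nat \<Rightarrow> nat \<Rightarrow> nat" where
  "affine_perm n a b = (\<lambda>x. if x < n then (a * x + b) mod n else x)"

definition G :: "nat \<Rightarrow> (nat \<Rightarrow> nat) set" where
  "G n = {affine_perm n a b | a b. a \<in> units_mod n \<and> b < n}"

end

theory Submission
  imports Defs "HOL-Number_Theory.Totient" "HOL-Library.Real_Mod"
begin


lemma eps_pow_n: "n \<ge> 1 \<Longrightarrow> eps n ^ n = 1"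
  unfolding eps_def DeMoivre by simp

lemma eps_pow_mod: "n \<ge> 1 \<Longrightarrow> eps n ^ a = eps n ^ (a mod n)"
proof -
  assume n: "n \<ge> 1"
  have "eps n ^ a = eps n ^ (n * (a div n) + a mod n)" by simp
  also have "\<dots> = (eps n ^ n) ^ (a div n) * eps n ^ (a mod n)"
    by (simp only: power_add power_mult)
  finally show ?thesis using eps_pow_n[OF n] by simp
qed

lemma eps_pow_cong: "n \<ge> 1 \<Longrightarrow> [a = b] (mod n) \<Longrightarrow> eps n ^ a = eps n ^ b"
  by (metis eps_pow_mod cong_def)

lemma eps_nz: "eps n \<noteq> 0" unfolding eps_def by simp

lemma eps_pow_inj_aux: assumes n: "n \<ge> 1" and "0 < d" "d < n" shows "eps n ^ d \<noteq> 1"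
proof
  assume "eps n ^ d = 1"
  then have "cis (real d * (2 * pi / real n)) = 1" unfolding eps_def DeMoivre .
  then obtain m where m: "real d * (2 * pi / real n) = of_int m * (2 * pi)" using cis_eq_1_iff by blast
  then have "real d / real n = of_int m" using n by (simp add: field_simps)
  moreover have "0 < real d / real n" "real d / real n < 1" using assms by auto
  ultimately show False by (metis of_int_0_less_iff of_int_less_1_iff not_le zero_less_iff_neq_zero int_one_le_iff_zero_less less_le_not_le)
qed

lemma eps_pow_inj: assumes n: "n \<ge> 1" and "a < n" "b < n" "eps n ^ a = eps n ^ b" shows "a = b"
proof (rule ccontr)
  assume ne: "a \<noteq> b"
  { fix a b :: nat assume ab: "a < b" "b < n" "eps n ^ a = eps n ^ b"
    have "eps n ^ b = eps n ^ a * eps n ^ (b - a)" using ab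
      by (metis less_imp_le le_add_diff_inverse power_add)
    then have "eps n ^ (b - a) = 1" using ab(3) eps_nz by simp
    then have False using eps_pow_inj_aux[OF n, of "b - a"] ab by simp }
  then show False using assms ne by (metis linorder_neqE_nat)
qed

lemma eps_pow_eq_cong: assumes n: "n \<ge> 1" and "eps n ^ a = eps n ^ b" shows "a mod n = b mod n"
  using eps_pow_inj[OF n, of "a mod n" "b mod n"] eps_pow_mod[OF n] assms n by simp



definition lin :: "nat \<Rightarrow> (nat \<Rightarrow> complex) \<Rightarrow> (nat \<Rightarrow> complex) \<Rightarrow> complex" where
  "lin n c X = (\<Sum>k<n. c k * X k)"

lemma lin_add: "lin n c (\<lambda>j. X j + s * Y j) = lin n c X + s * lin n c Y"
  unfolding lin_def by (simp add: sum.distrib sum_distrib_left algebra_simps)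

lemma kernel:
  assumes n: "n \<ge> 1" and g0: "g 0 \<noteq> 0" and H: "\<And>X. lin n g X = 0 \<Longrightarrow> lin n f X = 0"
    and k: "k < n"
  shows "f k * g 0 = f 0 * g k"
proof (cases "k = 0")
  case True then show ?thesis by simp
next
  case False
  define X where "X = (\<lambda>j. if j = k then g 0 else if j = 0 then - g k else 0)"
  have e: "lin n c X = c k * g 0 - c 0 * g k" for c
  proof -
    have "lin n c X = (\<Sum>j\<in>{k, 0}. c j * X j)"
      unfolding lin_def using k n by (intro sum.mono_neutral_right) (auto simp: X_def)
    then show ?thesis using False by (simp add: X_def)
  qed
  have "lin n g X = 0" using e[of g] by simp
  then have "lin n f X = 0" by (rule H)
  then show ?thesis using e[of f] by simp
qed

lemma avoid:
  assumes "finite I" and "\<And>i. i \<in> I \<Longrightarrow> \<exists>Y. lin n g Y = 0 \<and> lin n (f i) Y \<noteq> 0"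
  shows "\<exists>X. lin n g X = 0 \<and> (\<forall>i\<in>I. lin n (f i) X \<noteq> 0)"
  using assms
proof (induction I rule: finite_induct)
  case empty
  show ?case by (rule exI[of _ "\<lambda>_. 0"]) (simp add: lin_def)
next
  case (insert a I)
  obtain X where X: "lin n g X = 0" "\<forall>i\<in>I. lin n (f i) X \<noteq> 0" using insert by auto
  obtain Y where Y: "lin n g Y = 0" "lin n (f a) Y \<noteq> 0" using insert.prems by auto
  show ?case
  proof (cases "lin n (f a) X = 0")
    case False then show ?thesis using X by auto
  next
    case True
    have "finite (insert 0 ((\<lambda>i. - lin n (f i) X / lin n (f i) Y) ` I))" using insert by simp
    then obtain s :: complex where s: "s \<notin> insert 0 ((\<lambda>i. - lin n (f i) X / lin n (f i) Y) ` I)"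
      using ex_new_if_finite[OF infinite_UNIV_char_0] by blast
    define Z where "Z = (\<lambda>j. X j + s * Y j)"
    have "lin n g Z = 0" unfolding Z_def lin_add using X Y by simp
    moreover have "lin n (f a) Z \<noteq> 0" unfolding Z_def lin_add using True Y s by simp
    moreover have "lin n (f i) Z \<noteq> 0" if i: "i \<in> I" for i
    proof (cases "lin n (f i) Y = 0")
      case True then show ?thesis unfolding Z_def lin_add using X i by simp
    next
      case False
      show ?thesis
      proof
        assume "lin n (f i) Z = 0"
        then have "lin n (f i) X + s * lin n (f i) Y = 0" unfolding Z_def lin_add .
        then have "s = - lin n (f i) X / lin n (f i) Y" using False by (simp add: field_simps add_eq_0_iff)
        then show False using s i by auto
      qed
    qed
    ultimately show ?thesis by blast
  qed
qed



lemma Psi_lin: "Psi n X = (\<Prod>i\<in>units_mod n. lin n (\<lambda>k. eps n ^ (i * k)) X)"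
  unfolding Psi_def lin_def ..

lemma finite_units: "finite (units_mod n)" unfolding units_mod_def by simp

lemma one_unit: "n \<ge> 2 \<Longrightarrow> 1 \<in> units_mod n" unfolding units_mod_def by simp

lemma stab_sub_G:
  assumes n: "n \<ge> 2" and s: "\<sigma> \<in> Stab n"
  shows "\<sigma> \<in> G n"
proof -
  have n1: "n \<ge> 1" using n by simp
  have p: "\<sigma> permutes {..<n}" and inv: "\<And>X. Psi n (\<lambda>j. X (\<sigma> j)) = Psi n X"
    using s unfolding Stab_def perm_act_def by (auto simp: fun_eq_iff)
  define rr where "rr = inv \<sigma>"
  have inv2: "Psi n (\<lambda>j. X (rr j)) = Psi n X" for X
    using inv[of "\<lambda>j. X (rr j)"] permutes_inverses[OF p] unfolding rr_def by simp
  define L where "L = (\<lambda>i k. eps n ^ (i * k))"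
  define g where "g = (\<lambda>k. eps n ^ (\<sigma> k))"
  have glin: "lin n g X = lin n (L 1) (\<lambda>j. X (rr j))" for X
  proof -
    have "lin n (L 1) (\<lambda>j. X (rr j)) = (\<Sum>k<n. (\<lambda>j. eps n ^ j * X (rr j)) (\<sigma> k))"
      unfolding lin_def L_def mult_1
      by (rule sum.reindex_bij_betw[symmetric]) (rule permutes_imp_bij[OF p])
    also have "\<dots> = lin n g X" unfolding lin_def g_def rr_def using permutes_inverses[OF p] by simp
    finally show ?thesis by simp
  qed
  have cover: "\<exists>i\<in>units_mod n. lin n (L i) X = 0" if "lin n g X = 0" for X
  proof -
    have "lin n (L 1) (\<lambda>j. X (rr j)) = 0" using that glin by simp
    then have "Psi n (\<lambda>j. X (rr j)) = 0"
      unfolding Psi_lin using one_unit[OF n] finite_units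
      by (subst prod_zero_iff) (auto simp: L_def intro!: bexI[of _ 1])
    then have "Psi n X = 0" using inv2 by simp
    then show ?thesis unfolding Psi_lin using finite_units by (auto simp: L_def prod_zero_iff)
  qed
  have "\<exists>i\<in>units_mod n. \<not> (\<exists>Y. lin n g Y = 0 \<and> lin n (L i) Y \<noteq> 0)"
  proof (rule ccontr)
    assume "\<not> ?thesis"
    then obtain X where "lin n g X = 0" "\<forall>i\<in>units_mod n. lin n (L i) X \<noteq> 0"
      using avoid[of "units_mod n" n g L] finite_units by blast
    then show False using cover by blast
  qed
  then obtain i where i: "i \<in> units_mod n" and H: "\<And>Y. lin n g Y = 0 \<Longrightarrow> lin n (L i) Y = 0" by blast
  have g0: "g 0 \<noteq> 0" unfolding g_def using eps_nz by simp
  have "\<sigma> x = affine_perm n i (\<sigma> 0) x" for x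
  proof (cases "x < n")
    case True
    have "L i x * g 0 = L i 0 * g x" using kernel[of n g "L i" x, OF n1 g0 H True] .
    then have "eps n ^ (i * x + \<sigma> 0) = eps n ^ (\<sigma> x)" unfolding L_def g_def by (simp add: power_add)
    then have "(i * x + \<sigma> 0) mod n = \<sigma> x mod n" by (rule eps_pow_eq_cong[OF n1])
    moreover have "\<sigma> x < n" using permutes_in_image[OF p] True by simp
    ultimately show ?thesis using True unfolding affine_perm_def by simp
  next
    case False
    then show ?thesis using permutes_not_in[OF p] unfolding affine_perm_def by simp
  qed
  moreover have "\<sigma> 0 < n" using permutes_in_image[OF p] n by simp
  ultimately show ?thesis unfolding G_def using i by blast
qed



lemma bij_endo: "finite A \<Longrightarrow> f ` A \<subseteq> A \<Longrightarrow> inj_on f A \<Longrightarrow> bij_betw f A A"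
  by (simp add: bij_betw_def endo_inj_surj)

lemma units_sum_dvd:
  assumes n: "n > 2" shows "n dvd (\<Sum>i\<in>units_mod n. i)"
proof -
  let ?U = "units_mod n"
  have U: "?U = totatives n"
  proof (intro set_eqI iffI)
    fix x assume "x \<in> ?U"
    then have "x < n" "coprime x n" by (auto simp: units_mod_def)
    moreover have "x \<noteq> 0" using \<open>coprime x n\<close> n by (intro notI) simp
    ultimately show "x \<in> totatives n" by (simp add: in_totatives_iff)
  next
    fix x assume "x \<in> totatives n"
    then have "x \<le> n" "coprime x n" by (auto simp: in_totatives_iff)
    moreover have "x \<noteq> n" using \<open>coprime x n\<close> n by (intro notI) simp
    ultimately show "x \<in> ?U" by (simp add: units_mod_def)
  qed
  obtain m where m: "card ?U = 2 * m" using totient_even[OF n] U totient_def by (metis evenE)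
  have bij: "bij_betw (\<lambda>i. n - i) ?U ?U"
  proof (rule bij_endo)
    show "finite ?U" by (rule finite_units)
    show "(\<lambda>i. n - i) ` ?U \<subseteq> ?U"
    proof
      fix y assume "y \<in> (\<lambda>i. n - i) ` ?U"
      then obtain i where i: "i \<in> ?U" "y = n - i" by auto
      have "i \<noteq> 0" using i n by (intro notI) (simp add: units_mod_def)
      moreover have "coprime (n - i) n" using i gcd_diff2_nat[of i n]
        by (auto simp: units_mod_def coprime_iff_gcd_eq_1)
      ultimately show "y \<in> ?U" using i n by (auto simp: units_mod_def)
    qed
    show "inj_on (\<lambda>i. n - i) ?U" by (auto simp: inj_on_def units_mod_def)
  qed
  have "(\<Sum>i\<in>?U. n - i) = (\<Sum>i\<in>?U. i)" by (rule sum.reindex_bij_betw[OF bij])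
  moreover have "(\<Sum>i\<in>?U. n - i) + (\<Sum>i\<in>?U. i) = (\<Sum>i\<in>?U. n)"
    by (subst sum.distrib[symmetric]) (rule sum.cong, auto simp: units_mod_def)
  ultimately have "2 * (\<Sum>i\<in>?U. i) = 2 * (m * n)" using m by simp
  then show ?thesis by simp
qed

lemma affine_permutes:
  assumes a: "coprime a n" and n: "n \<ge> 1"
  shows "affine_perm n a b permutes {..<n}"
proof (rule bij_imp_permutes)
  show "bij_betw (affine_perm n a b) {..<n} {..<n}"
  proof (rule bij_endo)
    show "affine_perm n a b ` {..<n} \<subseteq> {..<n}" using n by (auto simp: affine_perm_def)
    show "inj_on (affine_perm n a b) {..<n}"
    proof (rule inj_onI)
      fix x y assume xy: "x \<in> {..<n}" "y \<in> {..<n}" "affine_perm n a b x = affine_perm n a b y"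
      then have "[a * x + b = a * y + b] (mod n)" by (simp add: affine_perm_def cong_def)
      then have "[x = y] (mod n)" using a by (simp add: cong_add_rcancel_nat cong_mult_lcancel_nat)
      then show "x = y" using xy by (simp add: cong_less_modulus_unique_nat)
    qed
  qed simp
qed (simp add: affine_perm_def)



lemma inner_sum:
  assumes n: "n \<ge> 1" and b: "b < n" and aa': "[a * a' = 1] (mod n)"
  shows "(\<Sum>j<n. eps n ^ (i * j) * X (affine_perm n a b j))
       = eps n ^ (i * a' * (n - b)) * lin n (\<lambda>k. eps n ^ ((i * a') mod n * k)) X"
proof -
  have "coprime (a * a') n" using cong_imp_coprime[OF cong_sym[OF aa']] by simp
  then have a: "coprime a n" by simp
  have p: "affine_perm n a b permutes {..<n}" by (rule affine_permutes[OF a n])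
  define F where "F = (\<lambda>k. eps n ^ (i * a' * (k + (n - b))) * X k)"
  have "eps n ^ (i * a' * (n - b)) * lin n (\<lambda>k. eps n ^ ((i * a') mod n * k)) X = (\<Sum>k<n. F k)"
    unfolding lin_def F_def sum_distrib_left
  proof (rule sum.cong[OF refl])
    fix k
    have "[(i * a') mod n * k + i * a' * (n - b) = i * a' * k + i * a' * (n - b)] (mod n)"
      by (intro cong_add cong_scalar_right) (simp_all add: cong_def)
    also have "i * a' * k + i * a' * (n - b) = i * a' * (k + (n - b))" by (rule distrib_left[symmetric])
    finally have "[(i * a') mod n * k + i * a' * (n - b) = i * a' * (k + (n - b))] (mod n)" .
    then have "eps n ^ ((i * a') mod n * k + i * a' * (n - b)) = eps n ^ (i * a' * (k + (n - b)))"
      by (rule eps_pow_cong[OF n])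
    then show "eps n ^ (i * a' * (n - b)) * (eps n ^ ((i * a') mod n * k) * X k) = eps n ^ (i * a' * (k + (n - b))) * X k"
      by (simp add: power_add algebra_simps)
  qed
  also have "\<dots> = (\<Sum>j<n. F (affine_perm n a b j))"
    by (rule sum.reindex_bij_betw[symmetric]) (rule permutes_imp_bij[OF p])
  also have "\<dots> = (\<Sum>j<n. eps n ^ (i * j) * X (affine_perm n a b j))"
  proof (rule sum.cong[OF refl])
    fix j assume j: "j \<in> {..<n}"
    have "[(a * j + b) mod n + (n - b) = a * j + b + (n - b)] (mod n)"
      by (intro cong_add) (simp_all add: cong_def)
    moreover have "a * j + b + (n - b) = a * j + n" using b by simp
    ultimately have e1: "[(a * j + b) mod n + (n - b) = a * j + n] (mod n)" by simp
    have "[i * a' * ((a * j + b) mod n + (n - b)) = i * a' * (a * j + n)] (mod n)"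
      by (rule cong_scalar_left[OF e1])
    also have "i * a' * (a * j + n) = i * j * (a * a') + n * (i * a')" by (simp add: algebra_simps)
    also have "[\<dots> = i * j * 1 + 0] (mod n)"
      by (intro cong_add cong_scalar_left aa') (simp add: cong_def)
    finally have "[i * a' * ((a * j + b) mod n + (n - b)) = i * j] (mod n)" by simp
    then show "F (affine_perm n a b j) = eps n ^ (i * j) * X (affine_perm n a b j)"
      using j eps_pow_cong[OF n] unfolding F_def by (simp add: affine_perm_def)
  qed
  finally show ?thesis by simp
qed



lemma G_sub_stab:
  assumes n: "n > 2" and a: "a \<in> units_mod n" and b: "b < n"
  shows "affine_perm n a b \<in> Stab n"
proof -
  have n1: "n \<ge> 1" using n by simp
  have ca: "coprime a n" using a by (simp add: units_mod_def)
  obtain a' where aa': "[a * a' = 1] (mod n)" using cong_solve_coprime_nat[OF ca] by auto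
  have "coprime (a * a') n" using cong_imp_coprime[OF cong_sym[OF aa']] by simp
  then have ca': "coprime a' n" by simp
  let ?U = "units_mod n"
  define h where "h = (\<lambda>i. (i * a') mod n)"
  have bij: "bij_betw h ?U ?U"
  proof (rule bij_endo)
    show "finite ?U" by (rule finite_units)
    show "h ` ?U \<subseteq> ?U"
    proof
      fix y assume "y \<in> h ` ?U"
      then obtain i where i: "i \<in> ?U" "y = h i" by auto
      have "coprime (i * a') n" using i ca' by (simp add: units_mod_def)
      then have "coprime y n" using i cong_imp_coprime[of "i * a'" "i * a' mod n" n]
        unfolding h_def by (simp add: cong_def)
      moreover have "y < n" using i n unfolding h_def by simp
      ultimately show "y \<in> ?U" by (simp add: units_mod_def)
    qed
    show "inj_on h ?U"
    proof (rule inj_onI)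
      fix x y assume xy: "x \<in> ?U" "y \<in> ?U" "h x = h y"
      then have "[x * a' = y * a'] (mod n)" by (simp add: h_def cong_def)
      then have "[x = y] (mod n)" using ca' by (simp add: cong_mult_rcancel_nat)
      then show "x = y" using xy by (simp add: cong_less_modulus_unique_nat units_mod_def)
    qed
  qed
  have "Psi n (\<lambda>j. X (affine_perm n a b j)) = Psi n X" for X
  proof -
    have "Psi n (\<lambda>j. X (affine_perm n a b j))
        = (\<Prod>i\<in>?U. eps n ^ (i * a' * (n - b)) * lin n (\<lambda>k. eps n ^ (h i * k)) X)"
      unfolding Psi_def h_def using inner_sum[OF n1 b aa'] by simp
    also have "\<dots> = (\<Prod>i\<in>?U. eps n ^ (i * a' * (n - b))) * (\<Prod>i\<in>?U. lin n (\<lambda>k. eps n ^ (h i * k)) X)"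
      by (rule prod.distrib)
    also have "(\<Prod>i\<in>?U. eps n ^ (i * a' * (n - b))) = 1"
    proof -
      have "(\<Prod>i\<in>?U. eps n ^ (i * a' * (n - b))) = eps n ^ ((\<Sum>i\<in>?U. i) * (a' * (n - b)))"
        by (simp add: power_sum sum_distrib_right mult.assoc)
      also have "\<dots> = eps n ^ 0"
        using units_sum_dvd[OF n] by (intro eps_pow_cong[OF n1]) (simp add: cong_def)
      finally show ?thesis by simp
    qed
    also have "(\<Prod>i\<in>?U. lin n (\<lambda>k. eps n ^ (h i * k)) X) = (\<Prod>i\<in>?U. lin n (\<lambda>k. eps n ^ (i * k)) X)"
      by (rule prod.reindex_bij_betw[OF bij, where g = "\<lambda>i. lin n (\<lambda>k. eps n ^ (i * k)) X"])
    finally show ?thesis by (simp add: Psi_lin)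
  qed
  then show ?thesis
    unfolding Stab_def perm_act_def using affine_permutes[OF ca n1] by (auto simp: fun_eq_iff)
qed

theorem lemma2p1:
  fixes n :: nat
  assumes "n \<ge> 1"
  shows "Stab n = (if n \<le> 2 then {id} else G n)"
proof (cases "n \<le> 2")
  case False
  then have "Stab n = G n"
    using stab_sub_G G_sub_stab by (auto simp: G_def)
  then show ?thesis using False by simp
next
  case True
  have idS: "id \<in> Stab n" by (simp add: Stab_def perm_act_def)
  have "Stab n = {id}"
  proof (cases "n = 1")
    case True
    then show ?thesis using idS by (auto simp: Stab_def lessThan_Suc)
  next
    case False
    then have n2: "n = 2" using \<open>n \<le> 2\<close> assms by simp
    have U2: "units_mod 2 = {1}"
      by (auto simp: units_mod_def less_2_cases_iff)
    have U2s: "units_mod (Suc (Suc 0)) = {1}" using U2 by (simp add: numeral_2_eq_2)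
    have "\<sigma> = id" if s: "\<sigma> \<in> Stab 2" for \<sigma>
    proof -
      have "\<sigma> \<in> G 2" using stab_sub_G[of 2 \<sigma>] s by simp
      then obtain b where b: "b < 2" and sb: "\<sigma> = affine_perm 2 1 b"
        unfolding G_def U2 by auto
      show ?thesis
      proof (cases "b = 0")
        case True
        then show ?thesis using sb by (auto simp: affine_perm_def fun_eq_iff)
      next
        case False
        then have b1: "b = 1" using b by simp
        define X :: "nat \<Rightarrow> complex" where "X = (\<lambda>j. if j = 0 then 1 else 0)"
        have "perm_act \<sigma> (Psi 2) X = Psi 2 X" using s by (simp add: Stab_def)
        moreover have "Psi 2 X = 1"
          by (simp add: Psi_def U2 X_def numeral_2_eq_2)
        moreover have "perm_act \<sigma> (Psi 2) X = eps 2"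
          by (simp add: perm_act_def Psi_def U2 X_def numeral_2_eq_2 U2s sb b1 affine_perm_def)
        moreover have "eps 2 = -1" by (simp add: eps_def)
        ultimately show ?thesis by simp
      qed
    qed
    then show ?thesis using idS n2 by auto
  qed
  then show ?thesis using True by simp
qed

end
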